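(* Let $n$ be an integer with $|n|\ne 1$, $n\neq 0$, and let $\{a,b,c,d\}$ be a set of positive integers with the property $D(n)$ such that $n^2\le a<b<c<d$. Then $c>3.88\,a$ and $d>4.89\,c$.
   Context: A set of positive integers $S$ has the property $D(n)$ if $xy+n$ is a perfect square for all distinct $x,y\in S$. *)

theory Defs
  imports Complex_Main
begin

definition is_square :: "int \<Rightarrow> bool" where
  "is_square m \<longleftrightarrow> (\<exists>k::int. m = k ^ 2)"

definition has_property_D :: "int \<Rightarrow> int set \<Rightarrow> bool" where
  "has_property_D n S \<longleftrightarrow> (\<forall>x\<in>S. x > 0) \<and>
     (\<forall>x\<in>S. \<forall>y\<in>S. x \<noteq> y \<longrightarrow> is_square (x * y + n))"

end

theory Submission
  imports Defs
begin

lemma triple: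
  fixes n x y z r s t :: int
  assumes n0: "n \<noteq> 0" and nx: "n^2 \<le> x" and xy: "x < y" and yz: "y < z"
  and r0: "0 \<le> r" and s0: "0 \<le> s" and t0: "0 \<le> t"
  and hr: "r^2 = x*y+n" and hs: "s^2 = x*z+n" and ht: "t^2 = y*z+n"
  shows "(z = x+y+2*r \<and> x \<le> r) \<or> (z > 3*x+y \<and> 4*(r*s*t) < x*(z-x-y)^2)"
proof -
  have n2: "0 < n^2" using n0 by simp
  have xpos: "0 < x" using n2 nx by linarith
  have nabs: "\<bar>n\<bar> \<le> x"
  proof -
    have n1: "1 \<le> \<bar>n\<bar>" using n0 by arith
    have "\<bar>n\<bar> * 1 \<le> \<bar>n\<bar> * \<bar>n\<bar>" using n1 by (intro mult_left_mono) auto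
    then have "\<bar>n\<bar> \<le> \<bar>n\<bar> * \<bar>n\<bar>" by simp
    also have "\<dots> = n^2" by (simp add: power2_eq_square abs_mult[symmetric])
    finally show ?thesis using nx by linarith
  qed
  have "x*(x+1) \<le> x*y" using xy xpos by (intro mult_left_mono) auto
  then have xx: "x*x + x \<le> x*y" by (simp add: algebra_simps)
  have "x*(x+1) \<le> x*z" using xy yz xpos by (intro mult_left_mono) auto
  then have xx2: "x*x + x \<le> x*z" by (simp add: algebra_simps)
  have xx3: "x*x + x \<le> y*z"
  proof -
    have "x*z \<le> y*z" using xy yz xpos by (intro mult_right_mono) auto
    then show ?thesis using xx2 by linarith
  qed
  have rx: "x \<le> r" using power2_le_imp_le[of x r] hr xx nabs r0 by (simp add: power2_eq_square)
  have sx: "x \<le> s" using power2_le_imp_le[of x s] hs xx2 nabs s0 by (simp add: power2_eq_square)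
  have tx: "x \<le> t" using power2_le_imp_le[of x t] ht xx3 nabs t0 by (simp add: power2_eq_square)
  define e where "e = n*(x+y+z) + 2*x*y*z - 2*(r*s*t)"
  have "(y*s - r*t)^2 = y^2*s^2 - 2*y*(r*s*t) + r^2*t^2" by algebra
  also have "\<dots> = y^2*(x*z+n) - 2*y*(r*s*t) + (x*y+n)*(y*z+n)" by (simp add: hr hs ht)
  also have "\<dots> = y*e + n^2" unfolding e_def by algebra
  finally have id1: "y*e + n^2 = (y*s - r*t)^2" by simp
  have e0: "e \<ge> 0"
  proof (rule ccontr)
    assume "\<not> e \<ge> 0"
    then have "e \<le> -1" by simp
    then have "y*e \<le> y*(-1)" using xy xpos by (intro mult_left_mono) auto
    moreover have "(y*s - r*t)^2 \<ge> 0" by simp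
    ultimately show False using id1 nx xy by linarith
  qed
  have "(r*s*t)^2 = r^2*s^2*t^2" by algebra
  also have "\<dots> = (x*y+n)*(x*z+n)*(y*z+n)" by (simp add: hr hs ht)
  finally have rst2: "(r*s*t)^2 = (x*y+n)*(x*z+n)*(y*z+n)" .
  have "e*(e+4*(r*s*t)) = (n*(x+y+z) + 2*x*y*z)^2 - 4*(r*s*t)^2" unfolding e_def by algebra
  also have "\<dots> = n^2*((z-x-y)^2 - 4*r^2)" unfolding rst2 hr by algebra
  finally have id2: "e*(e+4*(r*s*t)) = n^2*((z-x-y)^2 - 4*r^2)" .
  have rst0: "0 \<le> r*s*t" using r0 s0 t0 by simp
  show ?thesis
  proof (cases "e = 0")
    case True
    then have "n^2*((z-x-y)^2 - 4*r^2) = 0" using id2 by simp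
    then have "(z-x-y)^2 = (2*r)^2" using n2 by (simp add: power_mult_distrib)
    then have "z-x-y = 2*r \<or> z-x-y = -(2*r)" using power2_eq_iff by blast
    then show ?thesis using rx yz xpos by auto
  next
    case False
    then have e1: "e \<ge> 1" using e0 by simp
    have "e + 4*(r*s*t) \<le> e*(e+4*(r*s*t))" using e1 rst0 by (simp add: mult_le_cancel_right1)
    then have A: "4*(r*s*t) < n^2*((z-x-y)^2 - 4*r^2)" using id2 e1 by linarith
    have "n^2*((z-x-y)^2 - 4*r^2) \<le> n^2*(z-x-y)^2" using n2 by (simp add: algebra_simps)
    also have "\<dots> \<le> x*(z-x-y)^2" using nx by (simp add: mult_right_mono)
    finally have B: "4*(r*s*t) < x*(z-x-y)^2" using A by linarith
    have "x*x*x \<le> r*s*t" using rx sx tx xpos by (meson mult_mono order_trans less_imp_le mult_nonneg_nonneg)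
    then have "x*(4*x*x) < x*(z-x-y)^2" using B by (simp add: algebra_simps)
    then have "(2*x)^2 < (z-x-y)^2" using xpos by (simp add: power2_eq_square)
    then have "2*x < \<bar>z-x-y\<bar>" by (metis abs_of_pos mult_pos_pos zero_less_numeral xpos power2_less_imp_less abs_ge_zero power2_abs)
    then have "z > 3*x+y" using yz xpos by linarith
    then show ?thesis using B by simp
  qed
qed

lemma nabs_le:
  fixes n x :: int
  assumes n0: "n \<noteq> 0" and nx: "n^2 \<le> x"
  shows "\<bar>n\<bar> \<le> x"
proof -
  have n1: "1 \<le> \<bar>n\<bar>" using n0 by arith
  have "\<bar>n\<bar> * 1 \<le> \<bar>n\<bar> * \<bar>n\<bar>" using n1 by (intro mult_left_mono) auto
  then have "\<bar>n\<bar> \<le> \<bar>n\<bar> * \<bar>n\<bar>" by simp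
  also have "\<dots> = n^2" by (simp add: power2_eq_square abs_mult[symmetric])
  finally show ?thesis using nx by linarith
qed

lemma part2:
  fixes n x c d p q w :: int
  assumes n0: "n \<noteq> 0" and nx: "n^2 \<le> x" and xc: "x < c" and cd: "c < d" and c4: "4 \<le> c"
  and p0: "0 \<le> p" and q0: "0 \<le> q" and w0: "0 \<le> w"
  and hp: "p^2 = x*c+n" and hq: "q^2 = x*d+n" and hw: "w^2 = c*d+n"
  and d3: "d > 3*x+c" and B: "4*(p*q*w) < x*(d-x-c)^2"
  shows "d > 5*c"
proof -
  have n2: "0 < n^2" using n0 by simp
  have xpos: "0 < x" using n2 nx by linarith
  have nabs: "\<bar>n\<bar> \<le> x" using nabs_le n0 nx by blast
  show ?thesis
  proof (cases "d - c > 2*(c-1)^2")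
    case True
    have "(c-2)^2 \<ge> 2^2" using c4 by (intro power_mono) auto
    moreover have "2*(c-1)^2 = 2*(c-2)^2 + 4*c - 6" by algebra
    moreover have "(2::int)^2 = 4" by simp
    ultimately show ?thesis using True by linarith
  next
    case False
    define W where "W = d - c"
    define v where "v = c - 1"
    have W0: "0 < W" using cd W_def by simp
    have Wv: "W \<le> 2*v^2" using False W_def v_def by simp
    have "W*W \<le> (2*v^2)*W" using Wv W0 by (intro mult_right_mono) auto
    moreover have "v^3 \<ge> 0" using v_def c4 by simp
    moreover have "(c-1)*(d-1)^2 - c*W^2 = 2*v^2*W + v^3 - W*W" unfolding W_def v_def by algebra
    ultimately have key: "c*W^2 \<le> (c-1)*(d-1)^2" by linarith
    have hp': "x*(c-1) \<le> p^2" using hp nabs by (simp add: algebra_simps)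
    have hq': "x*(d-1) \<le> q^2" using hq nabs by (simp add: algebra_simps)
    have hw': "c*(d-1) \<le> w^2" using hw nabs xc by (simp add: algebra_simps)
    have P1: "(x*(c-1))*(x*(d-1)) \<le> p^2*q^2" using hp' hq' xpos c4 cd by (intro mult_mono) auto
    have P2: "0 \<le> p^2*q^2" by simp
    have P3: "0 \<le> c*(d-1)" using c4 cd by simp
    have "(x*(c-1))*(x*(d-1))*(c*(d-1)) \<le> p^2*q^2*w^2" by (rule mult_mono[OF P1 hw' P2 P3])
    moreover have "(x*(c-1))*(x*(d-1))*(c*(d-1)) = (x^2*c)*((c-1)*(d-1)^2)" by algebra
    moreover have "(x^2*c)*(c*W^2) \<le> (x^2*c)*((c-1)*(d-1)^2)" using key xpos c4
      by (intro mult_left_mono) auto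
    moreover have "(x^2*c)*(c*W^2) = (x*c*W)^2" by algebra
    moreover have "p^2*q^2*w^2 = (p*q*w)^2" by algebra
    ultimately have S: "(x*c*W)^2 \<le> (p*q*w)^2" by linarith
    have pqw0: "0 \<le> p*q*w" using p0 q0 w0 by simp
    have L: "x*c*W \<le> p*q*w" by (rule power2_le_imp_le[OF S pqw0])
    have "(d-x-c)^2 \<le> W^2" unfolding W_def using d3 xpos by (intro power_mono) auto
    then have "x*(d-x-c)^2 \<le> x*W^2" using xpos by (intro mult_left_mono) auto
    then have "x*(4*c*W) < x*(W*W)" using L B by (simp add: power2_eq_square algebra_simps)
    then have "4*c*W < W*W" using xpos by simp
    then have "4*c < W" using W0 by (simp add: mult.commute)
    then show ?thesis unfolding W_def by simp
  qed
qed


lemma sq_obtain: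
  assumes "is_square m"
  shows "\<exists>r::int. 0 \<le> r \<and> r^2 = m"
proof -
  obtain k where "m = k^2" using assms unfolding is_square_def by blast
  then show ?thesis by (intro exI[of _ "\<bar>k\<bar>"]) simp
qed

theorem lemma5:
  fixes n a b c d :: int
  assumes "\<bar>n\<bar> \<noteq> 1" and "n \<noteq> 0"
    and "has_property_D n {a, b, c, d}"
    and "n ^ 2 \<le> a" and "a < b" and "b < c" and "c < d"
  shows "real_of_int c > 3.88 * real_of_int a \<and> real_of_int d > 4.89 * real_of_int c"
proof -
  note D = assms(3)[unfolded has_property_D_def]
  have n0: "n \<noteq> 0" and na: "n^2 \<le> a" and ab: "a < b" and bc: "b < c" and cd: "c < d"
    using assms by auto
  have n2: "0 < n^2" using n0 by simp
  have apos: "0 < a" using n2 na by linarith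
  have nb: "n^2 \<le> b" using na ab by linarith
  have "is_square (a*b+n)" using D ab by auto
  then obtain r where r: "0 \<le> r" "r^2 = a*b+n" using sq_obtain by blast
  have "is_square (a*c+n)" using D ab bc by auto
  then obtain s where s: "0 \<le> s" "s^2 = a*c+n" using sq_obtain by blast
  have "is_square (b*c+n)" using D bc by auto
  then obtain t where t: "0 \<le> t" "t^2 = b*c+n" using sq_obtain by blast
  have "is_square (a*d+n)" using D ab bc cd by auto
  then obtain u where u: "0 \<le> u" "u^2 = a*d+n" using sq_obtain by blast
  have "is_square (b*d+n)" using D bc cd by auto
  then obtain v where v: "0 \<le> v" "v^2 = b*d+n" using sq_obtain by blast
  have "is_square (c*d+n)" using D cd by auto
  then obtain w where w: "0 \<le> w" "w^2 = c*d+n" using sq_obtain by blast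
  have c4a: "c > 4*a"
    using triple[OF n0 na ab bc r(1) s(1) t(1) r(2) s(2) t(2)] ab by auto
  have c4: "4 \<le> c" using c4a apos by linarith
  have ac: "a < c" using ab bc by simp
  have T1: "(d = a+c+2*s \<and> a \<le> s) \<or> (d > 3*a+c \<and> 4*(s*u*w) < a*(d-a-c)^2)"
    by (rule triple[OF n0 na ac cd s(1) u(1) w(1) s(2) u(2) w(2)])
  have T2: "(d = b+c+2*t \<and> b \<le> t) \<or> (d > 3*b+c \<and> 4*(t*v*w) < b*(d-b-c)^2)"
    by (rule triple[OF n0 nb bc cd t(1) v(1) w(1) t(2) v(2) w(2)])
  have d5: "d > 5*c"
  proof (cases "d > 3*a+c \<and> 4*(s*u*w) < a*(d-a-c)^2")
    case True
    then show ?thesis using part2[OF n0 na ac cd c4 s(1) u(1) w(1) s(2) u(2) w(2)] by blast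
  next
    case F1: False
    show ?thesis
    proof (cases "d > 3*b+c \<and> 4*(t*v*w) < b*(d-b-c)^2")
      case True
      then show ?thesis using part2[OF n0 nb bc cd c4 t(1) v(1) w(1) t(2) v(2) w(2)] by blast
    next
      case False
      then have e1: "d = a+c+2*s" and e2: "d = b+c+2*t" using T1 T2 F1 by auto
      have "a*c < b*c" using ab c4 by simp
      then have "s^2 < t^2" using s t by simp
      then have "s < t" using t(1) by (rule power_less_imp_less_base)
      then show ?thesis using e1 e2 ab by simp
    qed
  qed
  have "real_of_int c > real_of_int (4*a)" using c4a by (simp only: of_int_less_iff)
  moreover have "real_of_int d > real_of_int (5*c)" using d5 by (simp only: of_int_less_iff)
  moreover have "real_of_int a > 0" using apos by simp
  moreover have "real_of_int c > 0" using c4 by simp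
  ultimately show ?thesis by simp
qed

end
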